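(* Let $\mathcal F$ be a proper filter on $\omega$ and consider the game $\mathfrak G(\mathcal F,\omega,\mathcal F^+)$. Then (1) player I has a winning strategy if and only if $\mathcal F$ is not weakly Ramsey; (2) player II has a winning strategy if and only if $\mathcal F$ is $\omega$-$+$-diagonalizable.
   Context: A filter on $\omega$ is a family $\mathcal F\subseteq\mathcal P(\omega)$ closed under finite intersections and supersets and containing all cofinite sets; it is proper if all its members are infinite. $\mathcal F^+=\{X\subseteq\omega:\omega\setminus X\notin\mathcal F\}$. $X\subseteq^*Y$ means $X\setminus Y$ is finite. Game $\mathfrak G(\mathcal X,\omega,\mathcal Z)$: at each stage $k\in\omega$, player I chooses $X_k\in\mathcal X$ and player II responds with $n_k\in X_k$; II wins if $\{n_k:k\in\omega\}\in\mathcal Z$, otherwise I wins. A tree is a set $T$ of finite sequences of natural numbers containing the empty sequence and closed under initial segments; it is an $\mathcal F$-tree if for each $\bar s\in T$ there is $X_{\bar s}\in\mathcal F$ with $\bar s^\frown n\in T$ for all $n\in X_{\bar s}$. A branch is an infinite sequence all of whose finite initial segments lie in $T$; it is "in" a family if its set of values belongs to that family. $\mathcal F$ is weakly Ramsey if every $\mathcal F$-tree has a branch in $\mathcal F^+$. $\mathcal F$ is $\omega$-$+$-diagonalizable if there are $X_n\in\mathcal F^+$ ($n\in\omega$) such that for every $Y\in\mathcal F$ there is $n$ with $X_n\subseteq^*Y$. *)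

theory Defs
  imports Main
begin

definition is_filter :: "nat set set \<Rightarrow> bool" where
  "is_filter F \<longleftrightarrow>
     (\<forall>A\<in>F. \<forall>B\<in>F. A \<inter> B \<in> F) \<and>
     (\<forall>A\<in>F. \<forall>B. A \<subseteq> B \<longrightarrow> B \<in> F) \<and>
     (\<forall>A. finite (UNIV - A) \<longrightarrow> A \<in> F)"

definition proper_filter :: "nat set set \<Rightarrow> bool" where
  "proper_filter F \<longleftrightarrow> is_filter F \<and> (\<forall>A\<in>F. infinite A)"

definition filter_plus :: "nat set set \<Rightarrow> nat set set" where
  "filter_plus F = {X. (UNIV - X) \<notin> F}"

text \<open>A strategy for player I maps the finite sequence of
  II's previous moves (which determines the whole history, I's moves being given
  by the strategy) to I's next move. A strategy for player II maps the finite
  sequence of I's moves so far (X_0, ..., X_k) to II's response n_k.\<close>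

definition I_strategy :: "nat set set \<Rightarrow> (nat list \<Rightarrow> nat set) \<Rightarrow> bool" where
  "I_strategy F \<sigma> \<longleftrightarrow> (\<forall>s. \<sigma> s \<in> F)"

definition I_winning :: "nat set set \<Rightarrow> (nat list \<Rightarrow> nat set) \<Rightarrow> bool" where
  "I_winning F \<sigma> \<longleftrightarrow> I_strategy F \<sigma> \<and>
     (\<forall>n :: nat \<Rightarrow> nat. (\<forall>k. n k \<in> \<sigma> (map n [0..<k])) \<longrightarrow>
        range n \<notin> filter_plus F)"

definition II_strategy :: "nat set set \<Rightarrow> (nat set list \<Rightarrow> nat) \<Rightarrow> bool" where
  "II_strategy F \<tau> \<longleftrightarrow> (\<forall>xs. xs \<noteq> [] \<and> set xs \<subseteq> F \<longrightarrow> \<tau> xs \<in> last xs)"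

definition II_winning :: "nat set set \<Rightarrow> (nat set list \<Rightarrow> nat) \<Rightarrow> bool" where
  "II_winning F \<tau> \<longleftrightarrow> II_strategy F \<tau> \<and>
     (\<forall>X :: nat \<Rightarrow> nat set. (\<forall>k. X k \<in> F) \<longrightarrow>
        range (\<lambda>k. \<tau> (map X [0..<Suc k])) \<in> filter_plus F)"

definition is_tree :: "nat list set \<Rightarrow> bool" where
  "is_tree T \<longleftrightarrow> [] \<in> T \<and> (\<forall>s\<in>T. \<forall>k. take k s \<in> T)"

definition F_tree :: "nat set set \<Rightarrow> nat list set \<Rightarrow> bool" where
  "F_tree F T \<longleftrightarrow> is_tree T \<and> (\<forall>s\<in>T. \<exists>X\<in>F. \<forall>n\<in>X. s @ [n] \<in> T)"

definition branch :: "nat list set \<Rightarrow> (nat \<Rightarrow> nat) \<Rightarrow> bool" where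
  "branch T f \<longleftrightarrow> (\<forall>k. map f [0..<k] \<in> T)"

definition weakly_Ramsey :: "nat set set \<Rightarrow> bool" where
  "weakly_Ramsey F \<longleftrightarrow>
     (\<forall>T. F_tree F T \<longrightarrow> (\<exists>f. branch T f \<and> range f \<in> filter_plus F))"

definition omega_plus_diagonalizable :: "nat set set \<Rightarrow> bool" where
  "omega_plus_diagonalizable F \<longleftrightarrow>
     (\<exists>X :: nat \<Rightarrow> nat set. (\<forall>n. X n \<in> filter_plus F) \<and>
        (\<forall>Y\<in>F. \<exists>n. finite (X n - Y)))"

end

theory Submission
  imports Defs "HOL-Library.Countable" "HOL-Library.Infinite_Set"
begin

lemma UNIV_in: "is_filter F \<Longrightarrow> UNIV \<in> F"
  unfolding is_filter_def by auto

lemma plus_meets: "is_filter F \<Longrightarrow> X \<in> filter_plus F \<Longrightarrow> Y \<in> F \<Longrightarrow> infinite (X \<inter> Y)"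
proof
  assume f: "is_filter F" and X: "X \<in> filter_plus F" and Y: "Y \<in> F" and fin: "finite (X \<inter> Y)"
  have e: "UNIV - (UNIV - (X \<inter> Y)) = X \<inter> Y" by blast
  have "UNIV - (X \<inter> Y) \<in> F" using f fin e unfolding is_filter_def by metis
  then have "Y \<inter> (UNIV - (X \<inter> Y)) \<in> F" using f Y unfolding is_filter_def by blast
  moreover have "Y \<inter> (UNIV - (X \<inter> Y)) \<subseteq> UNIV - X" by blast
  ultimately have "UNIV - X \<in> F" using f unfolding is_filter_def by blast
  then show False using X unfolding filter_plus_def by simp
qed

lemma part1a:
  assumes f: "is_filter F" and w: "I_winning F \<sigma>"
  shows "\<not> weakly_Ramsey F"
proof -
  define T where "T = {s. \<forall>k < length s. s ! k \<in> \<sigma> (take k s)}"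
  have tree: "F_tree F T"
    unfolding F_tree_def is_tree_def
  proof (intro conjI ballI allI)
    show "[] \<in> T" unfolding T_def by simp
  next
    fix s k assume "s \<in> T" then show "take k s \<in> T" unfolding T_def by (auto simp: min_def)
  next
    fix s assume s: "s \<in> T"
    have "\<forall>n\<in>\<sigma> s. s @ [n] \<in> T"
      using s unfolding T_def by (auto simp: nth_append less_Suc_eq)
    moreover have "\<sigma> s \<in> F" using w unfolding I_winning_def I_strategy_def by blast
    ultimately show "\<exists>X\<in>F. \<forall>n\<in>X. s @ [n] \<in> T" by blast
  qed
  have "\<not> (branch T g \<and> range g \<in> filter_plus F)" for g
  proof
    assume b: "branch T g \<and> range g \<in> filter_plus F"
    have "g k \<in> \<sigma> (map g [0..<k])" for k
    proof -
      have "map g [0..<Suc k] \<in> T" using b unfolding branch_def by blast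
      then have "\<forall>j<Suc k. (map g [0..<Suc k]) ! j \<in> \<sigma> (take j (map g [0..<Suc k]))"
        unfolding T_def by (simp del: upt_Suc)
      then have "(map g [0..<Suc k]) ! k \<in> \<sigma> (take k (map g [0..<Suc k]))"
        by blast
      moreover have "take k (map g [0..<Suc k]) = map g [0..<k]"
        by (simp add: take_map)
      ultimately show ?thesis by (simp del: upt_Suc)
    qed
    then show False using b w unfolding I_winning_def by blast
  qed
  then show ?thesis using tree unfolding weakly_Ramsey_def by blast
qed

lemma part1b:
  assumes f: "is_filter F" and nw: "\<not> weakly_Ramsey F"
  shows "\<exists>\<sigma>. I_winning F \<sigma>"
proof -
  obtain T where tree: "F_tree F T" and nb: "\<And>g. branch T g \<Longrightarrow> range g \<notin> filter_plus F"
    using nw unfolding weakly_Ramsey_def by blast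
  define \<sigma> where "\<sigma> s = (if s \<in> T then (SOME X. X \<in> F \<and> (\<forall>n\<in>X. s @ [n] \<in> T)) else UNIV)" for s
  have sp: "s \<in> T \<Longrightarrow> \<sigma> s \<in> F \<and> (\<forall>n\<in>\<sigma> s. s @ [n] \<in> T)" for s
  proof -
    assume "s \<in> T"
    then have "\<exists>X. X \<in> F \<and> (\<forall>n\<in>X. s @ [n] \<in> T)" using tree unfolding F_tree_def by blast
    from someI_ex[OF this] show ?thesis unfolding \<sigma>_def using \<open>s \<in> T\<close> by simp
  qed
  have strat: "I_strategy F \<sigma>"
    unfolding I_strategy_def using sp UNIV_in[OF f] by (auto simp: \<sigma>_def)
  have "range g \<notin> filter_plus F" if g: "\<forall>k. g k \<in> \<sigma> (map g [0..<k])" for g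
  proof -
    have "map g [0..<k] \<in> T" for k
    proof (induction k)
      case 0 then show ?case using tree unfolding F_tree_def is_tree_def by simp
    next
      case (Suc k) then show ?case using sp g by simp
    qed
    then show ?thesis using nb unfolding branch_def by blast
  qed
  then show ?thesis using strat unfolding I_winning_def by blast
qed

lemma part2a:
  assumes f: "is_filter F" and d: "omega_plus_diagonalizable F"
  shows "\<exists>\<tau>. II_winning F \<tau>"
proof -
  obtain D :: "nat \<Rightarrow> nat set" where D: "\<And>n. D n \<in> filter_plus F" and Dd: "\<And>Y. Y \<in> F \<Longrightarrow> \<exists>n. finite (D n - Y)"
    using d unfolding omega_plus_diagonalizable_def by blast
  define \<tau> where "\<tau> xs = (SOME n. n \<in> last xs \<and> n \<in> D (fst (prod_decode (length xs - 1))) \<and> length xs \<le> n)" for xs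
  have tp: "\<tau> xs \<in> last xs \<and> \<tau> xs \<in> D (fst (prod_decode (length xs - 1))) \<and> length xs \<le> \<tau> xs"
    if "last xs \<in> F" for xs
  proof -
    have inf: "infinite (D (fst (prod_decode (length xs - 1))) \<inter> last xs)"
      using plus_meets[OF f D that] .
    then obtain n where "n \<in> D (fst (prod_decode (length xs - 1))) \<inter> last xs" "length xs \<le> n"
      using inf[unfolded infinite_nat_iff_unbounded_le, rule_format, of "length xs"] by blast
    then have "\<exists>n. n \<in> last xs \<and> n \<in> D (fst (prod_decode (length xs - 1))) \<and> length xs \<le> n" by blast
    from someI_ex[OF this] show ?thesis unfolding \<tau>_def .
  qed
  have strat: "II_strategy F \<tau>"
    unfolding II_strategy_def
  proof (intro allI impI)
    fix xs :: "nat set list" assume h: "xs \<noteq> [] \<and> set xs \<subseteq> F"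
    then have "last xs \<in> F" using last_in_set by blast
    then show "\<tau> xs \<in> last xs" using tp by blast
  qed
  have "range (\<lambda>k. \<tau> (map X [0..<Suc k])) \<in> filter_plus F" if X: "\<forall>k. X k \<in> F" for X
  proof (rule ccontr)
    define a where "a k = \<tau> (map X [0..<Suc k])" for k
    have ap: "a k \<in> D (fst (prod_decode k)) \<and> Suc k \<le> a k" for k
    proof -
      have l: "last (map X [0..<Suc k]) = X k" by simp
      have "length (map X [0..<Suc k]) = Suc k" by simp
      then show ?thesis using tp[of "map X [0..<Suc k]"] X l unfolding a_def by simp
    qed
    assume "range (\<lambda>k. \<tau> (map X [0..<Suc k])) \<notin> filter_plus F"
    then have Z: "UNIV - range a \<in> F" unfolding filter_plus_def a_def by simp
    obtain m where fm: "finite (D m - (UNIV - range a))" using Dd[OF Z] by blast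
    then obtain b where b: "\<And>x. x \<in> D m - (UNIV - range a) \<Longrightarrow> x \<le> b"
      using fm[unfolded finite_nat_set_iff_bounded_le] by blast
    define k where "k = prod_encode (m, b)"
    have "a k \<in> D m" using ap[of k] unfolding k_def by simp
    then have "a k \<le> b" using b by blast
    moreover have "b \<le> k" unfolding k_def by (rule le_prod_encode_2)
    ultimately show False using ap[of k] by simp
  qed
  then show ?thesis using strat unfolding II_winning_def by blast
qed

lemma part2b:
  assumes f: "is_filter F" and w: "II_winning F \<tau>"
  shows "omega_plus_diagonalizable F"
proof -
  have strat: "\<And>xs. xs \<noteq> [] \<Longrightarrow> set xs \<subseteq> F \<Longrightarrow> \<tau> xs \<in> last xs"
    using w unfolding II_winning_def II_strategy_def by blast
  have win: "\<And>X. (\<forall>k. X k \<in> F) \<Longrightarrow> range (\<lambda>k. \<tau> (map X [0..<Suc k])) \<in> filter_plus F"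
    using w unfolding II_winning_def by blast
  define A where "A p = {\<tau> (p @ [Y]) | Y. Y \<in> F}" for p
  define C where "C p n = (if \<exists>Y. Y \<in> F \<and> \<tau> (p @ [Y]) = n then (SOME Y. Y \<in> F \<and> \<tau> (p @ [Y]) = n) else UNIV)" for p n
  define pos where "pos s = foldl (\<lambda>p n. p @ [C p n]) [] s" for s :: "nat list"
  have CF: "C p n \<in> F" for p n
  proof (cases "\<exists>Y. Y \<in> F \<and> \<tau> (p @ [Y]) = n")
    case True
    from someI_ex[OF this] show ?thesis unfolding C_def using True by simp
  next
    case False then show ?thesis unfolding C_def using UNIV_in[OF f] by auto
  qed
  have Ct: "n \<in> A p \<Longrightarrow> \<tau> (p @ [C p n]) = n" for p n
  proof -
    assume "n \<in> A p"
    then have e: "\<exists>Y. Y \<in> F \<and> \<tau> (p @ [Y]) = n" unfolding A_def by blast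
    from someI_ex[OF e] show ?thesis unfolding C_def using e by simp
  qed
  have pos_snoc: "pos (s @ [n]) = pos s @ [C (pos s) n]" for s n
    unfolding pos_def by simp
  have pos_F: "set (pos s) \<subseteq> F" for s
  proof (induction s rule: rev_induct)
    case Nil then show ?case unfolding pos_def by simp
  next
    case (snoc n s) then show ?case using pos_snoc CF by simp
  qed
  have Amem: "Y \<in> F \<Longrightarrow> \<tau> (p @ [Y]) \<in> A p" for Y p unfolding A_def by blast
  have Aplus: "A p \<in> filter_plus F" if p: "set p \<subseteq> F" for p
  proof (rule ccontr)
    assume "A p \<notin> filter_plus F"
    then have Z: "UNIV - A p \<in> F" unfolding filter_plus_def by simp
    have "\<tau> (p @ [UNIV - A p]) \<in> UNIV - A p" using strat[of "p @ [UNIV - A p]"] p Z by simp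
    moreover have "\<tau> (p @ [UNIV - A p]) \<in> A p" using Amem[OF Z] .
    ultimately show False by blast
  qed
  define Dm where "Dm k = A (pos (from_nat k))" for k :: nat
  have "\<exists>k. finite (Dm k - Y)" if Y: "Y \<in> F" for Y
  proof (rule ccontr)
    assume "\<not> (\<exists>k. finite (Dm k - Y))"
    then have ninf: "infinite (Dm k - Y)" for k by blast
    have "\<exists>n. n \<in> A (pos s) \<and> n \<notin> Y" for s
    proof -
      have "Dm (to_nat s) - Y \<noteq> {}" using ninf[of "to_nat s"] by (metis finite.emptyI)
      moreover have "Dm (to_nat s) = A (pos s)" unfolding Dm_def by simp
      ultimately show ?thesis by blast
    qed
    then have gp: "(SOME n. n \<in> A (pos s) \<and> n \<notin> Y) \<in> A (pos s) \<and> (SOME n. n \<in> A (pos s) \<and> n \<notin> Y) \<notin> Y" for s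
      by (rule someI_ex)
    define g where "g s = (SOME n. n \<in> A (pos s) \<and> n \<notin> Y)" for s
    define sq where "sq k = ((\<lambda>s. s @ [g s]) ^^ k) []" for k
    have sqS: "sq (Suc k) = sq k @ [g (sq k)]" for k unfolding sq_def by simp
    define X where "X k = C (pos (sq k)) (g (sq k))" for k
    have mp: "map X [0..<k] = pos (sq k)" for k
    proof (induction k)
      case 0 then show ?case unfolding sq_def pos_def by simp
    next
      case (Suc k) then show ?case using sqS pos_snoc unfolding X_def by simp
    qed
    have vals: "\<tau> (map X [0..<Suc k]) \<notin> Y" for k
    proof -
      have "map X [0..<Suc k] = pos (sq k) @ [C (pos (sq k)) (g (sq k))]"
        using mp[of k] unfolding X_def by simp
      moreover have "\<tau> (pos (sq k) @ [C (pos (sq k)) (g (sq k))]) = g (sq k)"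
        using Ct[OF gp[THEN conjunct1]] unfolding g_def .
      ultimately show ?thesis using gp unfolding g_def by simp
    qed
    have "\<forall>k. X k \<in> F" unfolding X_def using CF by simp
    then have R: "range (\<lambda>k. \<tau> (map X [0..<Suc k])) \<in> filter_plus F" by (rule win)
    have "Y \<subseteq> UNIV - range (\<lambda>k. \<tau> (map X [0..<Suc k]))" using vals by blast
    then have "UNIV - range (\<lambda>k. \<tau> (map X [0..<Suc k])) \<in> F"
      using Y f unfolding is_filter_def by blast
    then show False using R unfolding filter_plus_def by simp
  qed
  moreover have "Dm k \<in> filter_plus F" for k unfolding Dm_def using Aplus pos_F by blast
  ultimately show ?thesis unfolding omega_plus_diagonalizable_def by blast
qed

theorem theorem2p7:
  assumes "proper_filter F"
  shows "((\<exists>\<sigma>. I_winning F \<sigma>) \<longleftrightarrow> \<not> weakly_Ramsey F) \<and>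
         ((\<exists>\<tau>. II_winning F \<tau>) \<longleftrightarrow> omega_plus_diagonalizable F)"
proof -
  have f: "is_filter F" using assms unfolding proper_filter_def by blast
  show ?thesis using part1a[OF f] part1b[OF f] part2a[OF f] part2b[OF f] by blast
qed

end
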